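(* For $n\ge 1$, let $\mathcal M(n)$ be the number of MAB pairs and $\overline{\mathcal M}(n)$ the number of MAU pairs $(u,v)$ with $u,v\in\{a,b\}^n$. Then the number of pairs $(u,v)\in\{a,b\}^n\times\{a,b\}^n$ that have an external abelian-border but no internal abelian-border equals $\dfrac{2^{2n}-\mathcal M(n)-\overline{\mathcal M}(n)}{2}$, and so does the number of pairs that have an internal abelian-border but no external abelian-border.
   Context: Let $\Sigma=\{a,b\}$. For a word $w$ and a letter $c$, $|w|_c$ denotes the number of occurrences of $c$ in $w$. Two words $x,y$ are abelian equivalent, written $x\sim_{\mathrm{abl}}y$, if $|x|_c=|y|_c$ for all $c\in\Sigma$. For words $u,v$: a pair $(x,y)$ is an internal abelian-border of $(u,v)$ if $x$ is a nonempty proper suffix of $u$, $y$ is a proper prefix of $v$, and $x\sim_{\mathrm{abl}}y$; it is an external abelian-border of $(u,v)$ if $x$ is a nonempty proper prefix of $u$, $y$ is a proper suffix of $v$, and $x\sim_{\mathrm{abl}}y$. The pair $(u,v)$ is mutually abelian-bordered (MAB) if it has both an internal and an external abelian-border, and mutually abelian-unbordered (MAU) if it has neither. *)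

theory Defs
  imports Complex_Main "HOL-Library.Sublist"
begin

datatype letter = a | b

definition abl_equiv :: "letter list \<Rightarrow> letter list \<Rightarrow> bool" where
  "abl_equiv x y \<longleftrightarrow> (\<forall>c. count_list x c = count_list y c)"

definition internal_abl_border :: "letter list \<Rightarrow> letter list \<Rightarrow> letter list \<Rightarrow> letter list \<Rightarrow> bool" where
  "internal_abl_border u v x y \<longleftrightarrow>
     x \<noteq> [] \<and> strict_suffix x u \<and> strict_prefix y v \<and> abl_equiv x y"

definition external_abl_border :: "letter list \<Rightarrow> letter list \<Rightarrow> letter list \<Rightarrow> letter list \<Rightarrow> bool" where
  "external_abl_border u v x y \<longleftrightarrow>
     x \<noteq> [] \<and> strict_prefix x u \<and> strict_suffix y v \<and> abl_equiv x y"

definition has_internal :: "letter list \<Rightarrow> letter list \<Rightarrow> bool" where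
  "has_internal u v \<longleftrightarrow> (\<exists>x y. internal_abl_border u v x y)"

definition has_external :: "letter list \<Rightarrow> letter list \<Rightarrow> bool" where
  "has_external u v \<longleftrightarrow> (\<exists>x y. external_abl_border u v x y)"

definition MAB :: "letter list \<Rightarrow> letter list \<Rightarrow> bool" where
  "MAB u v \<longleftrightarrow> has_internal u v \<and> has_external u v"

definition MAU :: "letter list \<Rightarrow> letter list \<Rightarrow> bool" where
  "MAU u v \<longleftrightarrow> \<not> has_internal u v \<and> \<not> has_external u v"

text \<open>All words of length n over {a,b} (the type letter has exactly these two elements).\<close>
definition words :: "nat \<Rightarrow> letter list set" where
  "words n = {w. length w = n}"

definition M_count :: "nat \<Rightarrow> nat" where
  "M_count n = card {(u, v). u \<in> words n \<and> v \<in> words n \<and> MAB u v}"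

definition Mbar_count :: "nat \<Rightarrow> nat" where
  "Mbar_count n = card {(u, v). u \<in> words n \<and> v \<in> words n \<and> MAU u v}"

end

theory Submission
  imports Defs
begin

lemma len_count: "length x = count_list x a + count_list x b"
proof (induction x)
  case (Cons c x) then show ?case by (cases c) auto
qed simp

lemma abl_len: "abl_equiv x y \<Longrightarrow> length x = length y"
  unfolding abl_equiv_def by (metis len_count)

lemma abl_sym: "abl_equiv x y \<Longrightarrow> abl_equiv y x"
  unfolding abl_equiv_def by simp

lemma int_ext: "has_internal u v = has_external v u"
  unfolding has_internal_def has_external_def internal_abl_border_def external_abl_border_def
  by (metis abl_len abl_sym length_0_conv)

lemma univ_letter: "(UNIV :: letter set) = {a, b}"
  using letter.exhaust by auto

lemma words_eq: "words n = {xs. set xs \<subseteq> (UNIV::letter set) \<and> length xs = n}"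
  unfolding words_def by auto

lemma fin_words: "finite (words n)"
  unfolding words_eq by (rule finite_lists_length_eq) (simp add: univ_letter)

lemma card_words: "card (words n) = 2 ^ n"
  unfolding words_eq by (subst card_lists_length_eq) (simp_all add: univ_letter numeral_2_eq_2)

theorem mainTheorem13:
  fixes n :: nat
  assumes "n \<ge> 1"
  shows "real (card {(u, v). u \<in> words n \<and> v \<in> words n \<and> has_external u v \<and> \<not> has_internal u v})
           = (2 ^ (2 * n) - real (M_count n) - real (Mbar_count n)) / 2
       \<and> real (card {(u, v). u \<in> words n \<and> v \<in> words n \<and> has_internal u v \<and> \<not> has_external u v})
           = (2 ^ (2 * n) - real (M_count n) - real (Mbar_count n)) / 2"
proof -
  define E where "E = {(u, v). u \<in> words n \<and> v \<in> words n \<and> has_external u v \<and> \<not> has_internal u v}"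
  define I where "I = {(u, v). u \<in> words n \<and> v \<in> words n \<and> has_internal u v \<and> \<not> has_external u v}"
  define A where "A = {(u, v). u \<in> words n \<and> v \<in> words n \<and> MAB u v}"
  define B where "B = {(u, v). u \<in> words n \<and> v \<in> words n \<and> MAU u v}"
  define S where "S = words n \<times> words n"
  have fS: "finite S" unfolding S_def using fin_words by simp
  have cS: "card S = 2 ^ (2 * n)" unfolding S_def
    by (simp add: card_cartesian_product card_words power_mult_distrib flip: power_add mult_2)
  have sub: "E \<subseteq> S" "I \<subseteq> S" "A \<subseteq> S" "B \<subseteq> S"
    unfolding E_def I_def A_def B_def S_def by auto
  have fin: "finite E" "finite I" "finite A" "finite B"
    using sub fS finite_subset by blast+
  have bij: "bij_betw (\<lambda>(u, v). (v, u)) E I"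
    unfolding E_def I_def bij_betw_def inj_on_def
    by (auto simp: int_ext image_iff)
  have cEI: "card E = card I" using bij_betw_same_card[OF bij] .
  have "S = ((E \<union> I) \<union> A) \<union> B"
    unfolding E_def I_def A_def B_def S_def MAB_def MAU_def by auto
  moreover have "(E \<union> I) \<inter> A = {}" "((E \<union> I) \<union> A) \<inter> B = {}" "E \<inter> I = {}"
    unfolding E_def I_def A_def B_def MAB_def MAU_def by auto
  ultimately have "card S = card E + card I + card A + card B"
    using fin by (simp add: card_Un_disjoint)
  hence "real (2 ^ (2 * n)) = real (card E) + real (card I) + real (card A) + real (card B)"
    using cS by simp
  hence "(2::real) ^ (2 * n) = 2 * real (card E) + real (card A) + real (card B)"
    using cEI by simp
  hence "real (card E) = (2 ^ (2 * n) - real (card A) - real (card B)) / 2"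
    by (simp add: field_simps)
  thus ?thesis using cEI unfolding E_def I_def A_def B_def M_count_def Mbar_count_def by simp
qed

end
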